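(* Let $G$ be a graph on vertex set $\{1,\dots,n\}$ and consider the reliability extension of $\Gamma_{NC_1}$ on $G$ under the fractional attack model on player $x=1$, with baseline reliabilities $p^*_j\in(0,1]$ ($j\ne1$), a fixed reliability $p_1\in[0,1]$ of player $1$, common cost slopes $L,R>0$ and budget $B\ge0$. (i) If $G=K_n$ (complete graph), or $G=S_n$ is the star with center $1$, then the following profile is an optimal attack: order the nodes $2,\dots,n$ as $\sigma(2),\dots,\sigma(n)$ with $p^*_{\sigma(2)}\ge p^*_{\sigma(3)}\ge\dots\ge p^*_{\sigma(n)}$ (ties broken arbitrarily); for $i=2,3,\dots$ in turn, raise $p_{\sigma(i)}$ to $1$ while the remaining budget allows it, and when the remaining budget no longer allows raising $p_{\sigma(i)}$ to $1$, raise it as much as the remaining budget allows; leave all other reliabilities at their baseline values. (ii) If $G=S_n$ is the star with center $2$ (so $1$ is a leaf), then the profile obtained by the same procedure, but using the order $Q$ consisting of node $2$ first, followed by nodes $3,\dots,n$ in decreasing order of baseline reliability (ties broken arbitrarily), is an optimal attack.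
   Context: Game $\Gamma_{NC_1}$ on $G=(V,E)$: $v_{NC_1}(S)=|S\cup\delta(S)|$, where $\delta(S)$ is the set of vertices outside $S$ having a neighbour in $S$. For $T\subseteq S$, $\Pi_{T,S}=\prod_{i\in T}p_i\prod_{i\in S\setminus T}(1-p_i)$; the reliability extension with parameters $p=(p_1,\dots,p_n)$ is $\overline v(S)=\sum_{T\subseteq S}v(T)\Pi_{T,S}$. Shapley value: $Sh[v](x)=\frac1{n!}\sum_\pi[v(S^x_\pi\cup\{x\})-v(S^x_\pi)]$ over permutations $\pi$, $S^x_\pi$ the players preceding $x$. Fractional attack model on target $x$: $p_x$ is fixed; for every $j\ne x$ one may choose any $p_j\in[0,1]$ at cost $u_j(p_j)$, where $u_j(p)=L(p^*_j-p)$ if $p<p^*_j$ and $u_j(p)=R(p-p^*_j)$ if $p\ge p^*_j$. A profile is feasible if $\sum_{j\ne x}u_j(p_j)\le B$; an optimal attack is a feasible profile minimizing $Sh[\overline{v_{NC_1}}](x)$. *)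

theory Defs
  imports Complex_Main "HOL-Combinatorics.Multiset_Permutations"
begin

text \<open>Graphs on vertex set V (here V = {1..n}) given by a symmetric irreflexive
  edge predicate E.\<close>

definition complete_graph :: "nat \<Rightarrow> nat \<Rightarrow> bool" where
  "complete_graph i j \<longleftrightarrow> i \<noteq> j"

definition star_graph :: "nat \<Rightarrow> nat \<Rightarrow> nat \<Rightarrow> bool" where
  "star_graph c i j \<longleftrightarrow> i \<noteq> j \<and> (i = c \<or> j = c)"

definition nbhd_out :: "(nat \<Rightarrow> nat \<Rightarrow> bool) \<Rightarrow> nat set \<Rightarrow> nat set \<Rightarrow> nat set" where
  "nbhd_out E V S = {j \<in> V - S. \<exists>i\<in>S. E i j}"

definition v_NC1 :: "(nat \<Rightarrow> nat \<Rightarrow> bool) \<Rightarrow> nat set \<Rightarrow> nat set \<Rightarrow> real" where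
  "v_NC1 E V S = real (card (S \<union> nbhd_out E V S))"

definition Pi_TS :: "(nat \<Rightarrow> real) \<Rightarrow> nat set \<Rightarrow> nat set \<Rightarrow> real" where
  "Pi_TS p T S = (\<Prod>i\<in>T. p i) * (\<Prod>i\<in>S - T. 1 - p i)"

definition rel_ext :: "(nat set \<Rightarrow> real) \<Rightarrow> (nat \<Rightarrow> real) \<Rightarrow> nat set \<Rightarrow> real" where
  "rel_ext v p S = (\<Sum>T\<in>Pow S. v T * Pi_TS p T S)"

text \<open>Shapley value of player x in game v with player set V; permutations are
  represented as distinct lists enumerating V, and the players preceding x are
  those before x in the list.\<close>
definition shapley :: "nat set \<Rightarrow> (nat set \<Rightarrow> real) \<Rightarrow> nat \<Rightarrow> real" where
  "shapley V v x = (\<Sum>\<pi>\<in>permutations_of_set V.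
      v (set (takeWhile (\<lambda>y. y \<noteq> x) \<pi>) \<union> {x}) - v (set (takeWhile (\<lambda>y. y \<noteq> x) \<pi>)))
      / fact (card V)"

definition cost :: "real \<Rightarrow> real \<Rightarrow> real \<Rightarrow> real \<Rightarrow> real" where
  "cost L R ps p = (if p < ps then L * (ps - p) else R * (p - ps))"

definition feasible :: "nat set \<Rightarrow> nat \<Rightarrow> real \<Rightarrow> (nat \<Rightarrow> real) \<Rightarrow> real \<Rightarrow> real \<Rightarrow> real
    \<Rightarrow> (nat \<Rightarrow> real) \<Rightarrow> bool" where
  "feasible V x px pstar L R B p \<longleftrightarrow>
     p x = px \<and> (\<forall>j\<in>V - {x}. 0 \<le> p j \<and> p j \<le> 1) \<and>
     (\<Sum>j\<in>V - {x}. cost L R (pstar j) (p j)) \<le> B"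

definition optimal_attack :: "(nat \<Rightarrow> nat \<Rightarrow> bool) \<Rightarrow> nat set \<Rightarrow> nat \<Rightarrow> real \<Rightarrow> (nat \<Rightarrow> real)
    \<Rightarrow> real \<Rightarrow> real \<Rightarrow> real \<Rightarrow> (nat \<Rightarrow> real) \<Rightarrow> bool" where
  "optimal_attack E V x px pstar L R B p \<longleftrightarrow>
     feasible V x px pstar L R B p \<and>
     (\<forall>q. feasible V x px pstar L R B q \<longrightarrow>
        shapley V (rel_ext (v_NC1 E V) p) x \<le> shapley V (rel_ext (v_NC1 E V) q) x)"

fun greedy :: "real \<Rightarrow> (nat \<Rightarrow> real) \<Rightarrow> nat list \<Rightarrow> real \<Rightarrow> (nat \<Rightarrow> real) \<Rightarrow> nat \<Rightarrow> real" where
  "greedy R pstar [] b p = p"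
| "greedy R pstar (j # js) b p =
     (if R * (1 - pstar j) \<le> b
      then greedy R pstar js (b - R * (1 - pstar j)) (p(j := 1))
      else p(j := pstar j + b / R))"

definition greedy_profile :: "nat \<Rightarrow> real \<Rightarrow> (nat \<Rightarrow> real) \<Rightarrow> real \<Rightarrow> real \<Rightarrow> nat list
    \<Rightarrow> nat \<Rightarrow> real" where
  "greedy_profile x px pstar R B ord = greedy R pstar ord B (pstar(x := px))"

end

theory Submission
  imports Defs "HOL-Analysis.Analysis"
begin
definition Iw :: "(nat \<Rightarrow> real) \<Rightarrow> nat set \<Rightarrow> real" where
  "Iw r W = integral {0..1} (\<lambda>t. \<Prod>i\<in>W. 1 - t + t * r i)"

lemma Iw_has_integral: "((\<lambda>t. \<Prod>i\<in>W. 1 - t + t * r i) has_integral Iw r W) {0..1}"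
proof -
  have "continuous_on {0..1} (\<lambda>t::real. \<Prod>i\<in>W. 1 - t + t * r i)"
    by (intro continuous_intros)
  then show ?thesis unfolding Iw_def
    using integrable_continuous_interval integrable_integral by blast
qed

lemma Irec:
  assumes fin: "finite W"
  shows "(real (card W) + 1) * Iw r W = 1 + (\<Sum>x\<in>W. r x * Iw r (W - {x}))"
proof -
  define h where "h = (\<lambda>t i. 1 - t + t * r i)"
  define P where "P = (\<lambda>t. \<Prod>i\<in>W. h t i)"
  define F where "F = (\<lambda>t. (t - 1) * P t)"
  define G where "G = (\<lambda>t. (real (card W) + 1) * P t - (\<Sum>x\<in>W. r x * (\<Prod>j\<in>W - {x}. h t j)))"
  have deriv: "(F has_vector_derivative G t) (at t within {0..1})" for t
  proof -
    have hd: "((\<lambda>t. h t i) has_derivative (\<lambda>y. y * (r i - 1))) (at t within {0..1})" for i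
      unfolding h_def by (auto intro!: derivative_eq_intros simp: algebra_simps)
    have dP: "(P has_derivative (\<lambda>y. \<Sum>i\<in>W. y * (r i - 1) * (\<Prod>j\<in>W - {i}. h t j))) (at t within {0..1})"
      unfolding P_def by (rule has_derivative_prod[OF hd])
    have dF: "(F has_derivative (\<lambda>y. y * P t + (t - 1) * (\<Sum>i\<in>W. y * (r i - 1) * (\<Prod>j\<in>W - {i}. h t j)))) (at t within {0..1})"
      unfolding F_def
      by (rule has_derivative_eq_rhs, rule has_derivative_mult[OF _ dP])
         (auto intro!: derivative_eq_intros simp: algebra_simps)
    have key: "P t + (t - 1) * (\<Sum>i\<in>W. (r i - 1) * (\<Prod>j\<in>W - {i}. h t j)) = G t"
    proof -
      have "(t - 1) * (\<Sum>i\<in>W. (r i - 1) * (\<Prod>j\<in>W - {i}. h t j))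
          = (\<Sum>i\<in>W. P t - r i * (\<Prod>j\<in>W - {i}. h t j))"
        unfolding sum_distrib_left
      proof (rule sum.cong[OF refl])
        fix i assume "i \<in> W"
        then have "P t = h t i * (\<Prod>j\<in>W - {i}. h t j)"
          unfolding P_def using fin by (simp add: prod.remove)
        then show "(t - 1) * ((r i - 1) * (\<Prod>j\<in>W - {i}. h t j)) = P t - r i * (\<Prod>j\<in>W - {i}. h t j)"
          by (simp add: h_def algebra_simps)
      qed
      also have "\<dots> = real (card W) * P t - (\<Sum>i\<in>W. r i * (\<Prod>j\<in>W - {i}. h t j))"
        by (simp add: sum_subtractf)
      finally show ?thesis unfolding G_def by (simp add: algebra_simps)
    qed
    have "(\<lambda>y. y * P t + (t - 1) * (\<Sum>i\<in>W. y * (r i - 1) * (\<Prod>j\<in>W - {i}. h t j))) = (\<lambda>y. y * G t)"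
    proof
      fix y
      have "y * P t + (t - 1) * (\<Sum>i\<in>W. y * (r i - 1) * (\<Prod>j\<in>W - {i}. h t j))
          = y * (P t + (t - 1) * (\<Sum>i\<in>W. (r i - 1) * (\<Prod>j\<in>W - {i}. h t j)))"
        by (simp add: sum_distrib_left algebra_simps)
      then show "y * P t + (t - 1) * (\<Sum>i\<in>W. y * (r i - 1) * (\<Prod>j\<in>W - {i}. h t j)) = y * G t"
        using key by simp
    qed
    with dF show ?thesis by (simp add: has_vector_derivative_def mult.commute)
  qed
  have "(G has_integral (F 1 - F 0)) {0..1}"
    by (rule fundamental_theorem_of_calculus) (auto intro: deriv)
  moreover have "F 1 - F 0 = 1" unfolding F_def P_def h_def by simp
  ultimately have i1: "(G has_integral 1) {0..1}" by simp
  have i2: "(G has_integral ((real (card W) + 1) * Iw r W - (\<Sum>x\<in>W. r x * Iw r (W - {x})))) {0..1}"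
    unfolding G_def P_def h_def
    by (intro has_integral_diff has_integral_mult_right has_integral_sum fin Iw_has_integral)
  from has_integral_unique[OF i1 i2] show ?thesis by simp
qed

lemma perm_sum_rec:
  assumes "finite V" "V \<noteq> {}"
  shows "(\<Sum>\<pi>\<in>permutations_of_set V. f \<pi>) = (\<Sum>x\<in>V. \<Sum>\<pi>\<in>permutations_of_set (V - {x}). f (x # \<pi>))"
proof -
  have "(\<Sum>\<pi>\<in>permutations_of_set V. f \<pi>) = (\<Sum>\<pi>\<in>(\<Union>x\<in>V. (\<lambda>xs. x # xs) ` permutations_of_set (V - {x})). f \<pi>)"
    using permutations_of_set_nonempty[OF assms(2)] by simp
  also have "\<dots> = (\<Sum>x\<in>V. \<Sum>\<pi>\<in>(\<lambda>xs. x # xs) ` permutations_of_set (V - {x}). f \<pi>)"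
    by (rule sum.UNION_disjoint) (use assms(1) in auto)
  also have "\<dots> = (\<Sum>x\<in>V. \<Sum>\<pi>\<in>permutations_of_set (V - {x}). f (x # \<pi>))"
    by (rule sum.cong[OF refl], subst sum.reindex) (auto simp: inj_on_def)
  finally show ?thesis .
qed

lemma Sperm:
  "finite V \<Longrightarrow> 1 \<in> V \<Longrightarrow> card V = k \<Longrightarrow>
   (\<Sum>\<pi>\<in>permutations_of_set V. \<Prod>i\<in>set (takeWhile (\<lambda>y. y \<noteq> 1) \<pi>). r i)
     = fact (card V) * Iw r (V - {1::nat})"
proof (induction k arbitrary: V)
  case 0
  then show ?case by auto
next
  case (Suc k)
  define f where "f = (\<lambda>\<pi>. \<Prod>i\<in>set (takeWhile (\<lambda>y. y \<noteq> (1::nat)) \<pi>). r i)"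
  have cW: "card (V - {1}) = k" using Suc.prems by simp
  have "(\<Sum>\<pi>\<in>permutations_of_set V. f \<pi>) = (\<Sum>x\<in>V. \<Sum>\<pi>\<in>permutations_of_set (V - {x}). f (x # \<pi>))"
    by (rule perm_sum_rec) (use Suc.prems in auto)
  also have "\<dots> = (\<Sum>\<pi>\<in>permutations_of_set (V - {1}). f (1 # \<pi>)) + (\<Sum>x\<in>V - {1}. \<Sum>\<pi>\<in>permutations_of_set (V - {x}). f (x # \<pi>))"
    using Suc.prems by (simp add: sum.remove)
  also have "(\<Sum>\<pi>\<in>permutations_of_set (V - {1}). f (1 # \<pi>)) = fact k"
    using Suc.prems cW by (simp add: f_def)
  also have "(\<Sum>x\<in>V - {1}. \<Sum>\<pi>\<in>permutations_of_set (V - {x}). f (x # \<pi>))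
      = (\<Sum>x\<in>V - {1}. r x * (fact k * Iw r (V - {1} - {x})))"
  proof (rule sum.cong[OF refl])
    fix x assume x: "x \<in> V - {1}"
    have "(\<Sum>\<pi>\<in>permutations_of_set (V - {x}). f (x # \<pi>)) = (\<Sum>\<pi>\<in>permutations_of_set (V - {x}). r x * f \<pi>)"
    proof (rule sum.cong[OF refl])
      fix \<pi> assume "\<pi> \<in> permutations_of_set (V - {x})"
      then have "x \<notin> set \<pi>" by (auto dest: permutations_of_setD)
      then have "x \<notin> set (takeWhile (\<lambda>y. y \<noteq> 1) \<pi>)" by (meson set_takeWhileD)
      then show "f (x # \<pi>) = r x * f \<pi>" using x by (simp add: f_def)
    qed
    also have "\<dots> = r x * (\<Sum>\<pi>\<in>permutations_of_set (V - {x}). f \<pi>)" by (simp add: sum_distrib_left)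
    also have "(\<Sum>\<pi>\<in>permutations_of_set (V - {x}). f \<pi>) = fact (card (V - {x})) * Iw r (V - {x} - {1})"
      unfolding f_def by (rule Suc.IH) (use Suc.prems x in auto)
    also have "card (V - {x}) = k" using Suc.prems x by simp
    also have "V - {x} - {1} = V - {1} - {x}" by auto
    finally show "(\<Sum>\<pi>\<in>permutations_of_set (V - {x}). f (x # \<pi>)) = r x * (fact k * Iw r (V - {1} - {x}))" .
  qed
  also have "fact k + (\<Sum>x\<in>V - {1}. r x * (fact k * Iw r (V - {1} - {x})))
      = fact k * (1 + (\<Sum>x\<in>V - {1}. r x * Iw r (V - {1} - {x})))"
    by (simp add: sum_distrib_left algebra_simps)
  also have "1 + (\<Sum>x\<in>V - {1}. r x * Iw r (V - {1} - {x})) = (real k + 1) * Iw r (V - {1})"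
    using Irec[of "V - {1}" r] Suc.prems cW by simp
  also have "fact k * ((real k + 1) * Iw r (V - {1})) = fact (card V) * Iw r (V - {1})"
    using Suc.prems by (simp add: algebra_simps)
  finally show ?case unfolding f_def .
qed

lemma vNC1_sum:
  assumes "finite V" "T \<subseteq> V"
  shows "v_NC1 E V T = (\<Sum>j\<in>V. if (\<exists>i\<in>T. i = j \<or> E i j) then 1 else 0)"
proof -
  have "T \<union> nbhd_out E V T = {j\<in>V. \<exists>i\<in>T. i = j \<or> E i j}"
    using assms(2) unfolding nbhd_out_def by auto
  then show ?thesis unfolding v_NC1_def
    using assms(1) by (simp add: sum.inter_filter[symmetric])
qed

lemma prod_if_zero:
  assumes "finite T"
  shows "(if (\<exists>i\<in>T. c i) then 0 else 1) * (\<Prod>i\<in>T. p i) = (\<Prod>i\<in>T. if c i then 0 else (p i::real))"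
proof (cases "\<exists>i\<in>T. c i")
  case True
  then show ?thesis using assms by (auto intro: prod_zero)
next
  case False
  then show ?thesis by (auto intro: prod.cong)
qed

lemma rel_ext_formula:
  assumes fin: "finite V" and SV: "S \<subseteq> V"
  shows "rel_ext (v_NC1 E V) p S = (\<Sum>j\<in>V. 1 - (\<Prod>i\<in>S. if (i = j \<or> E i j) then 1 - p i else 1))"
proof -
  have finS: "finite S" using fin SV finite_subset by blast
  have "rel_ext (v_NC1 E V) p S = (\<Sum>T\<in>Pow S. (\<Sum>j\<in>V. if (\<exists>i\<in>T. i = j \<or> E i j) then 1 else 0) * Pi_TS p T S)"
    unfolding rel_ext_def
    by (rule sum.cong[OF refl]) (use SV fin in \<open>auto simp: vNC1_sum\<close>)
  also have "\<dots> = (\<Sum>j\<in>V. \<Sum>T\<in>Pow S. (if (\<exists>i\<in>T. i = j \<or> E i j) then 1 else 0) * Pi_TS p T S)"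
    by (simp add: sum_distrib_right sum.swap[of _ "Pow S"])
  also have "\<dots> = (\<Sum>j\<in>V. 1 - (\<Prod>i\<in>S. if (i = j \<or> E i j) then 1 - p i else 1))"
  proof (rule sum.cong[OF refl])
    fix j
    have one: "(\<Sum>T\<in>Pow S. Pi_TS p T S) = 1"
      using prod_add[OF finS, of p "\<lambda>i. 1 - p i"] by (simp add: Pi_TS_def)
    have two: "(\<Sum>T\<in>Pow S. (if (\<exists>i\<in>T. i = j \<or> E i j) then 0 else 1) * Pi_TS p T S)
        = (\<Prod>i\<in>S. if (i = j \<or> E i j) then 1 - p i else 1)"
    proof -
      have "(\<Sum>T\<in>Pow S. (if (\<exists>i\<in>T. i = j \<or> E i j) then 0 else 1) * Pi_TS p T S)
          = (\<Sum>T\<in>Pow S. (\<Prod>i\<in>T. if (i = j \<or> E i j) then 0 else p i) * (\<Prod>i\<in>S - T. 1 - p i))"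
      proof (rule sum.cong[OF refl])
        fix T assume "T \<in> Pow S"
        then have "finite T" using finS finite_subset by auto
        then show "(if (\<exists>i\<in>T. i = j \<or> E i j) then 0 else 1) * Pi_TS p T S
            = (\<Prod>i\<in>T. if (i = j \<or> E i j) then 0 else p i) * (\<Prod>i\<in>S - T. 1 - p i)"
          unfolding Pi_TS_def using prod_if_zero[of T "\<lambda>i. i = j \<or> E i j" p]
          by (simp add: mult.assoc)
      qed
      also have "\<dots> = (\<Prod>i\<in>S. (if (i = j \<or> E i j) then 0 else p i) + (1 - p i))"
        by (rule prod_add[OF finS, symmetric])
      also have "\<dots> = (\<Prod>i\<in>S. if (i = j \<or> E i j) then 1 - p i else 1)"
        by (rule prod.cong) auto
      finally show ?thesis .
    qed
    have "(\<Sum>T\<in>Pow S. (if (\<exists>i\<in>T. i = j \<or> E i j) then 1 else 0) * Pi_TS p T S)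
        = (\<Sum>T\<in>Pow S. Pi_TS p T S - (if (\<exists>i\<in>T. i = j \<or> E i j) then 0 else 1) * Pi_TS p T S)"
      by (rule sum.cong) auto
    also have "\<dots> = 1 - (\<Prod>i\<in>S. if (i = j \<or> E i j) then 1 - p i else 1)"
      by (simp add: sum_subtractf one two)
    finally show "(\<Sum>T\<in>Pow S. (if (\<exists>i\<in>T. i = j \<or> E i j) then 1 else 0) * Pi_TS p T S)
        = 1 - (\<Prod>i\<in>S. if (i = j \<or> E i j) then 1 - p i else 1)" .
  qed
  finally show ?thesis .
qed

definition Kt :: "(nat \<Rightarrow> nat \<Rightarrow> bool) \<Rightarrow> nat set \<Rightarrow> (nat \<Rightarrow> real) \<Rightarrow> real \<Rightarrow> real" where
  "Kt E V p t = (\<Sum>j\<in>{j\<in>V. 1 = j \<or> E 1 j}.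
      \<Prod>i\<in>V - {1}. 1 - t + t * (if (i = j \<or> E i j) then 1 - p i else 1))"

lemma Kt_has_integral:
  assumes "finite V"
  shows "(Kt E V p has_integral
     (\<Sum>j\<in>{j\<in>V. 1 = j \<or> E 1 j}. Iw (\<lambda>i. if (i = j \<or> E i j) then 1 - p i else 1) (V - {1}))) {0..1}"
  unfolding Kt_def[abs_def]
  by (intro has_integral_sum Iw_has_integral) (use assms in auto)

lemma shapley_formula:
  assumes fin: "finite V" and one: "1 \<in> V"
  shows "shapley V (rel_ext (v_NC1 E V) p) 1 = p 1 * integral {0..1} (Kt E V p)"
proof -
  define Q where "Q = (\<lambda>j i. if (i = j \<or> E i j) then 1 - p i else 1)"
  define c where "c = (\<lambda>j. if (1 = j \<or> E 1 j) then p 1 else 0)"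
  define P where "P = (\<lambda>\<pi>. set (takeWhile (\<lambda>y. y \<noteq> (1::nat)) \<pi>))"
  have diff: "rel_ext (v_NC1 E V) p (P \<pi> \<union> {1}) - rel_ext (v_NC1 E V) p (P \<pi>)
      = (\<Sum>j\<in>V. c j * (\<Prod>i\<in>P \<pi>. Q j i))" if "\<pi> \<in> permutations_of_set V" for \<pi>
  proof -
    have PV: "P \<pi> \<subseteq> V" "1 \<notin> P \<pi>" "finite (P \<pi>)"
      using that unfolding P_def by (auto dest: permutations_of_setD set_takeWhileD)
    have "rel_ext (v_NC1 E V) p (P \<pi> \<union> {1}) - rel_ext (v_NC1 E V) p (P \<pi>)
        = (\<Sum>j\<in>V. 1 - (\<Prod>i\<in>insert 1 (P \<pi>). Q j i)) - (\<Sum>j\<in>V. 1 - (\<Prod>i\<in>P \<pi>. Q j i))"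
      using rel_ext_formula[OF fin, of "P \<pi> \<union> {1}" E p] rel_ext_formula[OF fin, of "P \<pi>" E p] PV one
      unfolding Q_def by simp
    also have "\<dots> = (\<Sum>j\<in>V. (\<Prod>i\<in>P \<pi>. Q j i) - Q j 1 * (\<Prod>i\<in>P \<pi>. Q j i))"
      using PV by (simp add: sum_subtractf[symmetric])
    also have "\<dots> = (\<Sum>j\<in>V. c j * (\<Prod>i\<in>P \<pi>. Q j i))"
      by (rule sum.cong) (auto simp: Q_def c_def algebra_simps)
    finally show ?thesis .
  qed
  have "shapley V (rel_ext (v_NC1 E V) p) 1
      = (\<Sum>\<pi>\<in>permutations_of_set V. \<Sum>j\<in>V. c j * (\<Prod>i\<in>P \<pi>. Q j i)) / fact (card V)"
    unfolding shapley_def using diff by (simp add: P_def)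
  also have "\<dots> = (\<Sum>j\<in>V. c j * (\<Sum>\<pi>\<in>permutations_of_set V. \<Prod>i\<in>P \<pi>. Q j i)) / fact (card V)"
    by (simp add: sum.swap[of _ "permutations_of_set V"] sum_distrib_left)
  also have "\<dots> = (\<Sum>j\<in>V. c j * (fact (card V) * Iw (Q j) (V - {1}))) / fact (card V)"
    unfolding P_def using Sperm[OF fin one refl] by simp
  also have "\<dots> = (\<Sum>j\<in>V. c j * Iw (Q j) (V - {1}))"
    by (simp add: sum_divide_distrib)
  also have "\<dots> = p 1 * (\<Sum>j\<in>{j\<in>V. 1 = j \<or> E 1 j}. Iw (Q j) (V - {1}))"
    using fin by (simp add: c_def sum.inter_filter sum_distrib_left, intro sum.cong) auto
  also have "(\<Sum>j\<in>{j\<in>V. 1 = j \<or> E 1 j}. Iw (Q j) (V - {1})) = integral {0..1} (Kt E V p)"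
    using Kt_has_integral[OF fin, of E p] unfolding Q_def by (simp add: integral_unique)
  finally show ?thesis .
qed

lemma shapley_le:
  assumes fin: "finite V" and one: "1 \<in> V" and p1: "p 1 = q 1" "p 1 \<ge> 0"
    and le: "\<And>t. 0 \<le> t \<Longrightarrow> t \<le> 1 \<Longrightarrow> Kt E V p t \<le> Kt E V q t"
  shows "shapley V (rel_ext (v_NC1 E V) p) 1 \<le> shapley V (rel_ext (v_NC1 E V) q) 1"
proof -
  have "integral {0..1} (Kt E V p) \<le> integral {0..1} (Kt E V q)"
    using has_integral_le[OF Kt_has_integral[OF fin, of E p] Kt_has_integral[OF fin, of E q]] le
    by (simp add: integral_unique[OF Kt_has_integral[OF fin]])
  then show ?thesis using shapley_formula[OF fin one] p1 by (simp add: mult_left_mono)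
qed

lemma prod_unit_ge0: "\<forall>k\<in>K. 0 \<le> h k \<and> h k \<le> (1::real) \<Longrightarrow> 0 \<le> prod h K \<and> prod h K \<le> 1"
  by (metis prod_le_1 prod_nonneg)

lemma T1:
  fixes h e :: "nat \<Rightarrow> real"
  assumes "finite K" "0 \<le> A" "\<forall>k\<in>K. A \<le> h k \<and> 0 \<le> e k"
  shows "(A - sum e K) * prod (\<lambda>k. h k + e k) K \<le> A * prod h K"
  using assms
proof (induction K rule: finite_induct)
  case empty then show ?case by simp
next
  case (insert k K)
  let ?P = "prod (\<lambda>k. h k + e k) K"
  have IH: "(A - sum e K) * ?P \<le> A * prod h K" using insert by auto
  have hk: "A \<le> h k" "0 \<le> e k" using insert by auto
  have se: "0 \<le> sum e K" using insert by (auto intro: sum_nonneg)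
  have P0: "0 \<le> ?P" using insert by (auto intro!: prod_nonneg)
  have "(A - sum e (insert k K)) * prod (\<lambda>k. h k + e k) (insert k K)
      = ((A - e k - sum e K) * (h k + e k)) * ?P" using insert by (simp add: algebra_simps)
  also have "\<dots> \<le> (h k * (A - sum e K)) * ?P"
  proof (rule mult_right_mono[OF _ P0])
    have "(A - e k - sum e K) * (h k + e k) - h k * (A - sum e K) = e k * (A - sum e K - h k - e k)"
      by (simp add: algebra_simps)
    also have "\<dots> \<le> 0" using hk se by (intro mult_nonneg_nonpos) auto
    finally show "(A - e k - sum e K) * (h k + e k) \<le> h k * (A - sum e K)" by simp
  qed
  also have "\<dots> = h k * ((A - sum e K) * ?P)" by simp
  also have "\<dots> \<le> h k * (A * prod h K)"
    using IH hk assms(2) by (intro mult_left_mono) linarith+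
  also have "\<dots> = A * prod h (insert k K)" using insert by simp
  finally show ?case .
qed

lemma W1:
  fixes H e :: "nat \<Rightarrow> real"
  assumes "finite K" "0 \<le> A" "\<forall>k\<in>K. A \<le> H k \<and> 0 \<le> e k \<and> e k \<le> H k"
  shows "(A - sum e K) * prod H K \<le> A * prod (\<lambda>k. H k - e k) K"
  using assms
proof (induction K rule: finite_induct)
  case empty then show ?case by simp
next
  case (insert k K)
  let ?P = "prod H K"
  have IH: "(A - sum e K) * ?P \<le> A * prod (\<lambda>k. H k - e k) K" using insert by auto
  have hk: "A \<le> H k" "0 \<le> e k" "e k \<le> H k" using insert by auto
  have se: "0 \<le> sum e K" using insert by (auto intro: sum_nonneg)
  have P0: "0 \<le> ?P" using insert by (auto intro!: prod_nonneg)
  have "(A - sum e (insert k K)) * prod H (insert k K)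
      = ((A - e k - sum e K) * H k) * ?P" using insert by (simp add: algebra_simps)
  also have "\<dots> \<le> ((H k - e k) * (A - sum e K)) * ?P"
  proof (rule mult_right_mono[OF _ P0])
    have "(A - e k - sum e K) * H k - (H k - e k) * (A - sum e K) = e k * (A - sum e K - H k)"
      by (simp add: algebra_simps)
    also have "\<dots> \<le> 0" using hk se by (intro mult_nonneg_nonpos) auto
    finally show "(A - e k - sum e K) * H k \<le> (H k - e k) * (A - sum e K)" by simp
  qed
  also have "\<dots> = (H k - e k) * ((A - sum e K) * ?P)" by simp
  also have "\<dots> \<le> (H k - e k) * (A * prod (\<lambda>k. H k - e k) K)"
    using IH hk by (intro mult_left_mono) auto
  also have "\<dots> = A * prod (\<lambda>k. H k - e k) (insert k K)" using insert by simp
  finally show ?case .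
qed

lemma W2:
  fixes H e :: "nat \<Rightarrow> real"
  assumes "finite K" "\<forall>k\<in>K. 0 \<le> e k \<and> e k \<le> H k \<and> H k \<le> 1"
  shows "prod H K - sum e K \<le> prod (\<lambda>k. H k - e k) K"
  using assms
proof (induction K rule: finite_induct)
  case empty then show ?case by simp
next
  case (insert k K)
  have IH: "prod H K - sum e K \<le> prod (\<lambda>k. H k - e k) K" using insert by auto
  have hk: "0 \<le> e k" "e k \<le> H k" "H k \<le> 1" using insert by auto
  have se: "0 \<le> sum e K" using insert by (auto intro: sum_nonneg)
  have "\<forall>k\<in>K. 0 \<le> H k \<and> H k \<le> 1"
  proof
    fix k assume "k \<in> K"
    then have "0 \<le> e k" "e k \<le> H k" "H k \<le> 1" using insert.prems by auto
    then show "0 \<le> H k \<and> H k \<le> 1" by linarith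
  qed
  then have P1: "prod H K \<le> 1" "0 \<le> prod H K" using prod_unit_ge0[of K H] by auto
  have "prod H (insert k K) - sum e (insert k K) = H k * prod H K - e k - sum e K"
    using insert by simp
  also have "\<dots> \<le> (H k - e k) * (prod H K - sum e K)"
  proof -
    have "(H k - e k) * (prod H K - sum e K) - (H k * prod H K - e k - sum e K)
        = (1 - H k) * sum e K + e k * (1 - prod H K) + e k * sum e K"
      by (simp add: algebra_simps)
    also have "\<dots> \<ge> 0" using hk se P1 by (intro add_nonneg_nonneg mult_nonneg_nonneg) auto
    finally show ?thesis by simp
  qed
  also have "\<dots> \<le> (H k - e k) * prod (\<lambda>k. H k - e k) K"
    using IH hk by (intro mult_left_mono) auto
  also have "\<dots> = prod (\<lambda>k. H k - e k) (insert k K)" using insert by simp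
  finally show ?case .
qed

lemma L1:
  fixes h e :: "nat \<Rightarrow> real"
  assumes "finite K" "\<forall>k\<in>K. 0 \<le> h k \<and> 0 \<le> e k \<and> h k + e k \<le> 1"
  shows "prod (\<lambda>k. h k + e k) K \<le> prod h K + sum e K"
  using assms
proof (induction K rule: finite_induct)
  case empty then show ?case by simp
next
  case (insert k K)
  have IH: "prod (\<lambda>k. h k + e k) K \<le> prod h K + sum e K" using insert by auto
  have hk: "0 \<le> h k" "0 \<le> e k" "h k + e k \<le> 1" using insert by auto
  have se: "0 \<le> sum e K" using insert by (auto intro: sum_nonneg)
  have "\<forall>k\<in>K. 0 \<le> h k \<and> h k \<le> 1"
  proof
    fix k assume "k \<in> K"
    then have "0 \<le> h k" "0 \<le> e k" "h k + e k \<le> 1" using insert.prems by auto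
    then show "0 \<le> h k \<and> h k \<le> 1" by linarith
  qed
  then have P1: "prod h K \<le> 1" "0 \<le> prod h K" using prod_unit_ge0[of K h] by auto
  have "prod (\<lambda>k. h k + e k) (insert k K) = (h k + e k) * prod (\<lambda>k. h k + e k) K"
    using insert by simp
  also have "\<dots> \<le> (h k + e k) * (prod h K + sum e K)"
    using IH hk by (intro mult_left_mono) auto
  also have "\<dots> \<le> h k * prod h K + e k + sum e K"
  proof -
    have "h k * prod h K + e k + sum e K - (h k + e k) * (prod h K + sum e K)
        = (1 - h k - e k) * sum e K + e k * (1 - prod h K)"
      by (simp add: algebra_simps)
    also have "\<dots> \<ge> 0" using hk se P1 by (intro add_nonneg_nonneg mult_nonneg_nonneg) auto
    finally show ?thesis by simp
  qed
  also have "\<dots> = prod h (insert k K) + sum e (insert k K)" using insert by simp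
  finally show ?case .
qed

lemma G0: "j \<notin> set \<sigma> \<Longrightarrow> greedy R ps \<sigma> b p j = p j"
  by (induction \<sigma> arbitrary: b p) auto

lemma G1:
  "distinct \<sigma> \<Longrightarrow> \<forall>j\<in>set \<sigma>. p j = ps j \<and> ps j \<le> 1 \<Longrightarrow> 0 \<le> b \<Longrightarrow> 0 < R \<Longrightarrow> j \<in> set \<sigma> \<Longrightarrow>
   ps j \<le> greedy R ps \<sigma> b p j \<and> greedy R ps \<sigma> b p j \<le> 1"
proof (induction \<sigma> arbitrary: b p)
  case Nil then show ?case by simp
next
  case (Cons a \<sigma>)
  show ?case
  proof (cases "R * (1 - ps a) \<le> b")
    case True
    then have g: "greedy R ps (a # \<sigma>) b p = greedy R ps \<sigma> (b - R * (1 - ps a)) (p(a := 1))" by simp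
    show ?thesis
    proof (cases "j = a")
      case True
      then show ?thesis using g Cons.prems by (simp add: G0)
    next
      case False
      then show ?thesis unfolding g using Cons.prems True
        by (intro Cons.IH) auto
    qed
  next
    case False
    then have "b / R < 1 - ps a" using Cons.prems by (simp add: divide_less_eq mult.commute)
    then show ?thesis using False Cons.prems by auto
  qed
qed

lemma G3:
  "distinct \<sigma> \<Longrightarrow> \<forall>j\<in>set \<sigma>. p j = ps j \<and> ps j \<le> 1 \<Longrightarrow> 0 \<le> b \<Longrightarrow> 0 < R \<Longrightarrow>
   (\<Sum>j\<in>set \<sigma>. greedy R ps \<sigma> b p j - ps j) = min (\<Sum>j\<in>set \<sigma>. 1 - ps j) (b / R)"
proof (induction \<sigma> arbitrary: b p)
  case Nil then show ?case by simp
next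
  case (Cons a \<sigma>)
  have s0: "0 \<le> (\<Sum>j\<in>set \<sigma>. 1 - ps j)" using Cons.prems by (intro sum_nonneg) auto
  show ?case
  proof (cases "R * (1 - ps a) \<le> b")
    case True
    let ?g = "greedy R ps \<sigma> (b - R * (1 - ps a)) (p(a := 1))"
    have g: "greedy R ps (a # \<sigma>) b p = ?g" using True by simp
    have IH: "(\<Sum>j\<in>set \<sigma>. ?g j - ps j) = min (\<Sum>j\<in>set \<sigma>. 1 - ps j) ((b - R * (1 - ps a)) / R)"
      using Cons.prems True by (intro Cons.IH) auto
    have ga: "?g a = 1" using Cons.prems by (simp add: G0)
    have "(\<Sum>j\<in>set (a # \<sigma>). ?g j - ps j) = (1 - ps a) + (\<Sum>j\<in>set \<sigma>. ?g j - ps j)"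
      using Cons.prems ga by simp
    also have "\<dots> = min (\<Sum>j\<in>set (a # \<sigma>). 1 - ps j) (b / R)"
      using IH Cons.prems by (simp add: diff_divide_distrib)
    finally show ?thesis using g by simp
  next
    case False
    then have lt: "b / R < 1 - ps a" using Cons.prems by (simp add: divide_less_eq mult.commute)
    have "(\<Sum>j\<in>set (a # \<sigma>). greedy R ps (a # \<sigma>) b p j - ps j)
        = b / R + (\<Sum>j\<in>set \<sigma>. (p(a := ps a + b / R)) j - ps j)"
      using False Cons.prems by simp
    also have "(\<Sum>j\<in>set \<sigma>. (p(a := ps a + b / R)) j - ps j) = 0"
      using Cons.prems by (intro sum.neutral) auto
    finally show ?thesis using lt s0 Cons.prems by simp
  qed
qed

lemma swap_budget:
  fixes u w A B :: real
  assumes "u \<le> w" "B \<le> A"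
  shows "max 0 (w - A) + max 0 (u - B) \<le> max 0 (u - A) + max 0 (w - B)"
  using assms by (auto simp: max_def)

lemma prodA:
  assumes "distinct \<sigma>" "sorted_wrt (\<lambda>i j. ps j \<le> ps i) \<sigma>"
    "\<forall>j\<in>set \<sigma>. 0 \<le> ps j \<and> ps j \<le> 1 \<and> p j = ps j"
    "0 < R" "0 \<le> b" "0 \<le> t" "t \<le> 1"
    "\<forall>j\<in>set \<sigma>. 0 \<le> q j \<and> q j \<le> 1"
    "(\<Sum>j\<in>set \<sigma>. max 0 (q j - ps j)) \<le> b / R"
  shows "(\<Prod>j\<in>set \<sigma>. 1 - t * greedy R ps \<sigma> b p j) \<le> (\<Prod>j\<in>set \<sigma>. 1 - t * q j)"
  using assms
proof (induction \<sigma> arbitrary: b p q)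
  case Nil then show ?case by simp
next
  case (Cons a \<sigma>)
  define S where "S = set \<sigma>"
  have aS: "a \<notin> S" and finS: "finite S" using Cons.prems unfolding S_def by auto
  have psS: "\<forall>k\<in>S. ps k \<le> ps a" using Cons.prems(2) unfolding S_def by auto
  have R: "0 < R" using Cons.prems by auto
  have t: "0 \<le> t" "t \<le> 1" using Cons.prems by auto
  have psa: "0 \<le> ps a" "ps a \<le> 1" using Cons.prems by auto
  have pspk: "\<forall>k\<in>S. 0 \<le> ps k \<and> ps k \<le> 1 \<and> p k = ps k" using Cons.prems unfolding S_def by auto
  have nnq: "\<And>q k. \<forall>j\<in>set (a # \<sigma>). 0 \<le> q j \<and> q j \<le> 1 \<Longrightarrow> k \<in> S \<Longrightarrow> 0 \<le> 1 - t * q k"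
  proof -
    fix q :: "nat \<Rightarrow> real" and k assume "\<forall>j\<in>set (a # \<sigma>). 0 \<le> q j \<and> q j \<le> 1" "k \<in> S"
    then have "0 \<le> q k" "q k \<le> 1" unfolding S_def by auto
    then have "t * q k \<le> 1 * 1" using t by (intro mult_mono) auto
    then show "0 \<le> 1 - t * q k" by simp
  qed
  show ?case
  proof (cases "R * (1 - ps a) \<le> b")
    case False
    define \<beta> where "\<beta> = b / R"
    have lt: "\<beta> < 1 - ps a" using False R unfolding \<beta>_def by (simp add: divide_less_eq mult.commute)
    have g: "greedy R ps (a # \<sigma>) b p = p(a := ps a + \<beta>)" using False \<beta>_def by simp
    define A where "A = 1 - t * ps a"
    define H where "H = (\<lambda>k. 1 - t * ps k)"
    define \<delta> where "\<delta> = (\<lambda>k. max 0 (q k - ps k))"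
    define e where "e = (\<lambda>k. t * \<delta> k)"
    define x where "x = t * \<delta> a"
    have qa: "0 \<le> q a" "q a \<le> 1" using Cons.prems by auto
    have budget: "\<delta> a + sum \<delta> S \<le> \<beta>" using Cons.prems aS unfolding \<delta>_def \<beta>_def S_def by simp
    have d0: "\<forall>k. 0 \<le> \<delta> k" unfolding \<delta>_def by simp
    have sd0: "0 \<le> sum \<delta> S" using d0 by (simp add: sum_nonneg)
    have LHS: "(\<Prod>j\<in>set (a # \<sigma>). 1 - t * greedy R ps (a # \<sigma>) b p j) = (A - t * \<beta>) * prod H S"
    proof -
      have "(\<Prod>j\<in>set (a # \<sigma>). 1 - t * greedy R ps (a # \<sigma>) b p j)
          = (1 - t * (ps a + \<beta>)) * (\<Prod>j\<in>S. 1 - t * (p(a := ps a + \<beta>)) j)"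
        using aS finS unfolding g S_def by simp
      also have "(\<Prod>j\<in>S. 1 - t * (p(a := ps a + \<beta>)) j) = prod H S"
        using aS pspk unfolding H_def by (intro prod.cong) auto
      finally show ?thesis unfolding A_def by (simp add: algebra_simps)
    qed
    have RHS: "(\<Prod>j\<in>set (a # \<sigma>). 1 - t * q j) = (1 - t * q a) * (\<Prod>j\<in>S. 1 - t * q j)"
      using aS finS unfolding S_def by simp
    have Hk: "\<forall>k\<in>S. A \<le> H k \<and> 0 \<le> e k \<and> e k \<le> H k"
    proof
      fix k assume k: "k \<in> S"
      have "t * ps k \<le> t * ps a" using psS k t by (intro mult_left_mono) auto
      moreover have "0 \<le> e k" unfolding e_def using d0 t by simp
      moreover have "e k \<le> H k"
      proof -
        have "t * max (q k) (ps k) \<le> 1 * 1"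
          using t pspk k Cons.prems(8) unfolding S_def by (intro mult_mono) auto
        moreover have "\<delta> k + ps k = max (q k) (ps k)" unfolding \<delta>_def by auto
        ultimately have "t * (\<delta> k + ps k) \<le> 1" by simp
        then show ?thesis unfolding e_def H_def by (simp add: algebra_simps)
      qed
      ultimately show "A \<le> H k \<and> 0 \<le> e k \<and> e k \<le> H k" unfolding A_def H_def by simp
    qed
    have A0: "0 \<le> A - t * \<beta>"
    proof -
      have da: "0 \<le> \<delta> a" using d0 by simp
      have "0 \<le> ps a + \<beta>" using psa sd0 budget da by linarith
      then have "t * (ps a + \<beta>) \<le> 1 * 1" using t lt psa
        by (intro mult_mono) auto
      then show ?thesis unfolding A_def by (simp add: algebra_simps)
    qed
    have Apos: "0 < A"
    proof (cases "t = 0")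
      case True then show ?thesis unfolding A_def by simp
    next
      case False
      then have "t * (ps a + \<beta>) < 1" using t lt psa
        by (smt (verit) mult_left_le mult_strict_left_mono)
      moreover have "0 \<le> t * \<beta>" using budget d0 sd0 t by (smt (verit) mult_nonneg_nonneg)
      ultimately show ?thesis unfolding A_def by (simp add: algebra_simps)
    qed
    have W: "(A - sum e S) * prod H S \<le> A * prod (\<lambda>k. H k - e k) S"
      by (rule W1[OF finS]) (use Apos Hk in auto)
    have se: "sum e S = t * sum \<delta> S" unfolding e_def by (simp add: sum_distrib_left)
    have PH0: "0 \<le> prod H S" using Hk Apos by (intro prod_nonneg) auto
    have PE0: "0 \<le> prod (\<lambda>k. H k - e k) S" using Hk by (intro prod_nonneg) auto
    have PEQ: "prod (\<lambda>k. H k - e k) S \<le> (\<Prod>j\<in>S. 1 - t * q j)"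
    proof (rule prod_mono)
      fix k assume k: "k \<in> S"
      have "t * q k \<le> t * (ps k + \<delta> k)" using t unfolding \<delta>_def by (intro mult_left_mono) auto
      then show "0 \<le> H k - e k \<and> H k - e k \<le> 1 - t * q k"
        using Hk k unfolding H_def e_def by (auto simp: algebra_simps)
    qed
    have xa: "0 \<le> x" "x \<le> t * \<beta>" "A - x \<le> 1 - t * q a" "0 \<le> A - x"
    proof -
      show "0 \<le> x" unfolding x_def using t d0 by simp
      show "x \<le> t * \<beta>" unfolding x_def using t budget sd0 by (intro mult_left_mono) auto
      have "t * q a \<le> t * (ps a + \<delta> a)" using t unfolding \<delta>_def by (intro mult_left_mono) auto
      then show "A - x \<le> 1 - t * q a" unfolding A_def x_def by (simp add: algebra_simps)
      have "t * max (q a) (ps a) \<le> 1 * 1" using t qa psa by (intro mult_mono) auto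
      moreover have "\<delta> a + ps a = max (q a) (ps a)" unfolding \<delta>_def by auto
      ultimately have "t * (\<delta> a + ps a) \<le> 1" by simp
      then show "0 \<le> A - x" unfolding A_def x_def by (simp add: algebra_simps)
    qed
    have tD: "t * sum \<delta> S \<le> t * \<beta> - x" unfolding x_def using budget t
      by (simp add: right_diff_distrib[symmetric] mult_left_mono)
    have "A * ((A - t * \<beta>) * prod H S) \<le> ((A - x) * (A - t * \<beta> + x)) * prod H S"
    proof -
      have "A * (A - t * \<beta>) \<le> (A - x) * (A - t * \<beta> + x)"
      proof -
        have "(A - x) * (A - t * \<beta> + x) - A * (A - t * \<beta>) = x * (t * \<beta> - x)" by (simp add: algebra_simps)
        also have "\<dots> \<ge> 0" using xa by simp
        finally show ?thesis by simp
      qed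
      then show ?thesis using PH0 by (simp add: mult.assoc[symmetric] mult_right_mono)
    qed
    also have "\<dots> \<le> ((A - x) * (A - sum e S)) * prod H S"
      using xa tD PH0 se by (intro mult_right_mono mult_left_mono) auto
    also have "\<dots> = (A - x) * ((A - sum e S) * prod H S)" by simp
    also have "\<dots> \<le> (A - x) * (A * prod (\<lambda>k. H k - e k) S)"
      using W xa by (intro mult_left_mono) auto
    also have "\<dots> = A * ((A - x) * prod (\<lambda>k. H k - e k) S)" by simp
    also have "\<dots> \<le> A * ((1 - t * q a) * (\<Prod>j\<in>S. 1 - t * q j))"
      using xa PEQ PE0 Apos by (intro mult_left_mono mult_mono) auto
    finally have "A * ((A - t * \<beta>) * prod H S) \<le> A * ((1 - t * q a) * (\<Prod>j\<in>S. 1 - t * q j))" .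
    then have "(A - t * \<beta>) * prod H S \<le> (1 - t * q a) * (\<Prod>j\<in>S. 1 - t * q j)"
      using Apos by simp
    then show ?thesis using LHS RHS by simp
  next
    case True
    define b2 where "b2 = b - R * (1 - ps a)"
    define p2 where "p2 = p(a := 1)"
    define g2 where "g2 = greedy R ps \<sigma> b2 p2"
    have g: "greedy R ps (a # \<sigma>) b p = g2" using True by (simp add: g2_def b2_def p2_def)
    have g2a: "g2 a = 1" using aS by (simp add: g2_def G0 p2_def S_def)
    have b2: "0 \<le> b2" using True b2_def by simp
    have p2S: "\<forall>j\<in>set \<sigma>. 0 \<le> ps j \<and> ps j \<le> 1 \<and> p2 j = ps j"
      using pspk aS by (auto simp: p2_def S_def)
    have dist: "distinct \<sigma>" using Cons.prems(1) by simp
    have sorted: "sorted_wrt (\<lambda>i j. ps j \<le> ps i) \<sigma>" using Cons.prems(2) by simp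
    have LHS: "(\<Prod>j\<in>set (a # \<sigma>). 1 - t * greedy R ps (a # \<sigma>) b p j) = (1 - t) * (\<Prod>j\<in>S. 1 - t * g2 j)"
      using aS finS g g2a by (simp add: S_def)
    have inner: "(1 - t) * (\<Prod>j\<in>S. 1 - t * g2 j) \<le> (\<Prod>j\<in>set (a # \<sigma>). 1 - t * q j)"
      if q01: "\<forall>j\<in>set (a # \<sigma>). 0 \<le> q j \<and> q j \<le> 1"
        and qb: "(\<Sum>j\<in>set (a # \<sigma>). max 0 (q j - ps j)) \<le> b / R"
        and qmax: "\<forall>k\<in>S. q k \<le> q a" for q
    proof -
      define \<delta> where "\<delta> = (\<lambda>k. max 0 (q k - ps k))"
      define D where "D = sum \<delta> S"
      define \<beta>2 where "\<beta>2 = b2 / R"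
      have \<beta>2: "\<beta>2 = b / R - (1 - ps a)" using R by (simp add: \<beta>2_def b2_def diff_divide_distrib)
      have \<beta>20: "0 \<le> \<beta>2" using b2 R by (simp add: \<beta>2_def)
      have budget: "\<delta> a + D \<le> b / R" using qb aS finS by (simp add: \<delta>_def D_def S_def)
      have qa: "q a \<le> ps a + \<delta> a" "0 \<le> q a" "q a \<le> 1" using q01 by (auto simp: \<delta>_def)
      have d0: "\<And>k. 0 \<le> \<delta> k" unfolding \<delta>_def by simp
      have RHS: "(\<Prod>j\<in>set (a # \<sigma>). 1 - t * q j) = (1 - t * q a) * (\<Prod>j\<in>S. 1 - t * q j)"
        using aS finS unfolding S_def by simp
      have PQ0: "0 \<le> (\<Prod>j\<in>S. 1 - t * q j)" using nnq[OF q01] by (intro prod_nonneg) auto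
      have tqa: "1 - t \<le> 1 - t * q a" using t qa by (simp add: mult_left_le)
      show ?thesis
      proof (cases "D \<le> \<beta>2")
        case True
        have IH: "(\<Prod>j\<in>S. 1 - t * g2 j) \<le> (\<Prod>j\<in>S. 1 - t * q j)"
          unfolding g2_def S_def
        proof (rule Cons.IH[OF dist sorted p2S R b2 t])
          show "\<forall>j\<in>set \<sigma>. 0 \<le> q j \<and> q j \<le> 1" using q01 by simp
          show "(\<Sum>j\<in>set \<sigma>. max 0 (q j - ps j)) \<le> b2 / R"
            using True by (simp add: D_def \<delta>_def \<beta>2_def S_def)
        qed
        have "(1 - t) * (\<Prod>j\<in>S. 1 - t * g2 j) \<le> (1 - t) * (\<Prod>j\<in>S. 1 - t * q j)"
          using IH t by (intro mult_left_mono) auto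
        also have "\<dots> \<le> (1 - t * q a) * (\<Prod>j\<in>S. 1 - t * q j)"
          using tqa PQ0 by (intro mult_right_mono) auto
        finally show ?thesis using RHS by simp
      next
        case False
        define lam where "lam = \<beta>2 / D"
        have D0: "0 < D" using False \<beta>20 by simp
        have lam: "0 \<le> lam" "lam < 1" "lam * D = \<beta>2"
          using D0 \<beta>20 False by (auto simp: lam_def)
        define q' where "q' = (\<lambda>k. q k - (1 - lam) * \<delta> k)"
        have d': "max 0 (q' k - ps k) = lam * \<delta> k" for k
        proof (cases "ps k \<le> q k")
          case True
          then have "q' k - ps k = lam * (q k - ps k)" by (simp add: q'_def \<delta>_def algebra_simps)
          then show ?thesis using True lam by (simp add: \<delta>_def)
        next
          case False
          then show ?thesis by (simp add: q'_def \<delta>_def)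
        qed
        have q'01: "0 \<le> q' k \<and> q' k \<le> 1" if "k \<in> S" for k
        proof -
          have "0 \<le> (1 - lam) * \<delta> k" using lam d0 by simp
          moreover have "0 \<le> q' k"
          proof (cases "ps k \<le> q k")
            case True
            then have "q' k = ps k + lam * (q k - ps k)" by (simp add: q'_def \<delta>_def algebra_simps)
            then show ?thesis using True lam pspk that by simp
          next
            case False
            then show ?thesis using q01 that by (simp add: q'_def \<delta>_def S_def)
          qed
          ultimately show ?thesis using q01 that by (auto simp: q'_def S_def)
        qed
        have IH: "(\<Prod>j\<in>S. 1 - t * g2 j) \<le> (\<Prod>j\<in>S. 1 - t * q' j)"
          unfolding g2_def S_def
        proof (rule Cons.IH[OF dist sorted p2S R b2 t])
          show "\<forall>j\<in>set \<sigma>. 0 \<le> q' j \<and> q' j \<le> 1" using q'01 by (simp add: S_def)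
          have "(\<Sum>j\<in>set \<sigma>. max 0 (q' j - ps j)) = lam * D"
            by (simp add: d' D_def S_def sum_distrib_left)
          then show "(\<Sum>j\<in>set \<sigma>. max 0 (q' j - ps j)) \<le> b2 / R"
            using lam by (simp add: \<beta>2_def)
        qed
        have Tr: "(1 - t * q a - (\<Sum>k\<in>S. t * (1 - lam) * \<delta> k)) * (\<Prod>k\<in>S. (1 - t * q k) + t * (1 - lam) * \<delta> k)
            \<le> (1 - t * q a) * (\<Prod>k\<in>S. 1 - t * q k)"
        proof (rule T1[OF finS])
          show "0 \<le> 1 - t * q a" using tqa t by simp
          show "\<forall>k\<in>S. 1 - t * q a \<le> 1 - t * q k \<and> 0 \<le> t * (1 - lam) * \<delta> k"
            using qmax t lam d0 by (auto intro: mult_left_mono)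
        qed
        have eq: "(\<Prod>k\<in>S. (1 - t * q k) + t * (1 - lam) * \<delta> k) = (\<Prod>k\<in>S. 1 - t * q' k)"
          by (rule prod.cong) (auto simp: q'_def algebra_simps)
        have se: "(\<Sum>k\<in>S. t * (1 - lam) * \<delta> k) = t * (D - \<beta>2)"
        proof -
          have "(\<Sum>k\<in>S. t * (1 - lam) * \<delta> k) = t * (1 - lam) * D" by (simp add: D_def sum_distrib_left)
          also have "\<dots> = t * (D - \<beta>2)" using lam(3) by (simp add: algebra_simps)
          finally show ?thesis .
        qed
        have c: "1 - t \<le> 1 - t * q a - t * (D - \<beta>2)"
        proof -
          have "q a + D - \<beta>2 \<le> 1" using qa budget \<beta>2 by simp
          then have "t * (q a + D - \<beta>2) \<le> t * 1" using t by (intro mult_left_mono) auto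
          then show ?thesis by (simp add: algebra_simps)
        qed
        have PQ'0: "0 \<le> (\<Prod>j\<in>S. 1 - t * q' j)"
        proof (rule prod_nonneg)
          fix k assume "k \<in> S"
          then have "t * q' k \<le> 1 * 1" using q'01 t by (intro mult_mono) auto
          then show "0 \<le> 1 - t * q' k" by simp
        qed
        have "(1 - t) * (\<Prod>j\<in>S. 1 - t * g2 j) \<le> (1 - t) * (\<Prod>j\<in>S. 1 - t * q' j)"
          using IH t by (intro mult_left_mono) auto
        also have "\<dots> \<le> (1 - t * q a - t * (D - \<beta>2)) * (\<Prod>j\<in>S. 1 - t * q' j)"
          using c PQ'0 by (intro mult_right_mono) auto
        also have "\<dots> \<le> (1 - t * q a) * (\<Prod>k\<in>S. 1 - t * q k)"
          using Tr eq se by simp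
        finally show ?thesis using RHS by simp
      qed
    qed
    have "Max (q ` set (a # \<sigma>)) \<in> q ` set (a # \<sigma>)" by (intro Max_in) auto
    then obtain k0 where k0: "k0 \<in> set (a # \<sigma>)" "q k0 = Max (q ` set (a # \<sigma>))"
      by (metis (no_types, lifting) imageE)
    have k0max: "\<forall>k\<in>set (a # \<sigma>). q k \<le> q k0"
    proof
      fix k assume "k \<in> set (a # \<sigma>)"
      then have "q k \<le> Max (q ` set (a # \<sigma>))" by (intro Max_ge) auto
      then show "q k \<le> q k0" using k0 by simp
    qed
    show ?thesis
    proof (cases "k0 = a")
      case True
      then show ?thesis using inner[of q] Cons.prems k0max LHS by (simp add: S_def)
    next
      case False
      then have k0S: "k0 \<in> S" using k0 by (simp add: S_def)
      define q2 where "q2 = q(a := q k0, k0 := q a)"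
      have q2a: "q2 a = q k0" and q2k: "q2 k0 = q a" and q2o: "\<And>k. k \<noteq> a \<Longrightarrow> k \<noteq> k0 \<Longrightarrow> q2 k = q k"
        using False by (auto simp: q2_def)
      have split: "\<And>f::nat\<Rightarrow>real. (\<Sum>j\<in>set (a # \<sigma>). f j) = f a + f k0 + (\<Sum>j\<in>S - {k0}. f j)"
        using aS finS k0S by (simp add: S_def sum.remove add.assoc)
      have splitp: "\<And>f::nat\<Rightarrow>real. (\<Prod>j\<in>set (a # \<sigma>). f j) = f a * f k0 * (\<Prod>j\<in>S - {k0}. f j)"
        using aS finS k0S by (simp add: S_def prod.remove mult.assoc)
      have neq: "q2 x = q x" if "x \<in> S - {k0}" for x
      proof -
        have "x \<noteq> a" "x \<noteq> k0" using that aS by auto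
        then show ?thesis by (rule q2o)
      qed
      have rest: "\<And>f. (\<Sum>j\<in>S - {k0}. f (q2 j) j) = (\<Sum>j\<in>S - {k0}. f (q j) j)"
        using neq by (intro sum.cong) auto
      have restp: "\<And>f. (\<Prod>j\<in>S - {k0}. f (q2 j)) = (\<Prod>j\<in>S - {k0}. f (q j))"
        using neq by (intro prod.cong) auto
      have q2e: "q2 j = (if j = k0 then q a else if j = a then q k0 else q j)" for j
        by (simp add: q2_def)
      have q01: "\<forall>j\<in>set (a # \<sigma>). 0 \<le> q j \<and> q j \<le> 1" using Cons.prems(8) by blast
      have q201: "\<forall>j\<in>set (a # \<sigma>). 0 \<le> q2 j \<and> q2 j \<le> 1"
      proof
        fix j assume j: "j \<in> set (a # \<sigma>)"
        have "a \<in> set (a # \<sigma>)" by simp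
        then show "0 \<le> q2 j \<and> q2 j \<le> 1" unfolding q2e using q01 j k0(1) by auto
      qed
      have le1: "q a \<le> q k0" using k0max by simp
      have le2: "ps k0 \<le> ps a" using psS k0S by blast
      have sw: "max 0 (q k0 - ps a) + max 0 (q a - ps k0) \<le> max 0 (q a - ps a) + max 0 (q k0 - ps k0)"
        by (rule swap_budget[OF le1 le2])
      have r1: "(\<Sum>j\<in>S - {k0}. max 0 (q2 j - ps j)) = (\<Sum>j\<in>S - {k0}. max 0 (q j - ps j))"
        by (rule rest)
      have "(\<Sum>j\<in>set (a # \<sigma>). max 0 (q2 j - ps j)) \<le> (\<Sum>j\<in>set (a # \<sigma>). max 0 (q j - ps j))"
        unfolding split q2a q2k r1 using sw by linarith
      then have q2b: "(\<Sum>j\<in>set (a # \<sigma>). max 0 (q2 j - ps j)) \<le> b / R" using Cons.prems(9) by linarith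
      have q2max: "\<forall>k\<in>S. q2 k \<le> q2 a"
      proof
        fix k assume k: "k \<in> S"
        then have "k \<noteq> a" using aS by auto
        moreover have "q k \<le> q k0" using k k0max unfolding S_def by simp
        ultimately show "q2 k \<le> q2 a" unfolding q2e using le1 by auto
      qed
      have "(\<Prod>j\<in>set (a # \<sigma>). 1 - t * q2 j) = (\<Prod>j\<in>set (a # \<sigma>). 1 - t * q j)"
        unfolding splitp q2a q2k using restp[of "\<lambda>x. 1 - t * x"] by simp
      then show ?thesis using inner[OF q201 q2b q2max] LHS by simp
    qed
  qed
qed

lemma prodC:
  assumes aS0: "a \<notin> set \<tau>" and dist: "distinct \<tau>" and sorted: "sorted_wrt (\<lambda>i j. ps j \<le> ps i) \<tau>"
    and psp: "\<forall>j\<in>set (a # \<tau>). 0 \<le> ps j \<and> ps j \<le> 1 \<and> p j = ps j"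
    and R: "0 < R" and b: "0 \<le> b" and t: "0 \<le> t" "t \<le> 1"
    and q01: "\<forall>j\<in>set (a # \<tau>). 0 \<le> q j \<and> q j \<le> 1"
    and qb: "(\<Sum>j\<in>set (a # \<tau>). max 0 (q j - ps j)) \<le> b / R"
  shows "(1 - t * greedy R ps (a # \<tau>) b p a) * (1 + (\<Prod>j\<in>set \<tau>. 1 - t * greedy R ps (a # \<tau>) b p j))
     \<le> (1 - t * q a) * (1 + (\<Prod>j\<in>set \<tau>. 1 - t * q j))"
proof -
  define S where "S = set \<tau>"
  have aS: "a \<notin> S" and finS: "finite S" using aS0 unfolding S_def by auto
  have psa: "0 \<le> ps a" "ps a \<le> 1" using psp by auto
  have pspk: "\<forall>k\<in>S. 0 \<le> ps k \<and> ps k \<le> 1 \<and> p k = ps k" using psp unfolding S_def by auto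
  define \<delta> where "\<delta> = (\<lambda>k. max 0 (q k - ps k))"
  define D where "D = sum \<delta> S"
  have d0: "\<And>k. 0 \<le> \<delta> k" unfolding \<delta>_def by simp
  have D0: "0 \<le> D" unfolding D_def using d0 by (simp add: sum_nonneg)
  have budget: "\<delta> a + D \<le> b / R" using qb aS finS by (simp add: \<delta>_def D_def S_def)
  have qa: "q a \<le> ps a + \<delta> a" "0 \<le> q a" "q a \<le> 1" using q01 by (auto simp: \<delta>_def)
  have nnq: "0 \<le> 1 - t * q k" if "k \<in> S" for k
  proof -
    have "t * q k \<le> 1 * 1" using q01 that t unfolding S_def by (intro mult_mono) auto
    then show ?thesis by simp
  qed
  define PQ where "PQ = (\<Prod>j\<in>S. 1 - t * q j)"
  have PQ: "0 \<le> PQ" "PQ \<le> 1" unfolding PQ_def using prod_unit_ge0[of S "\<lambda>j. 1 - t * q j"] nnq q01 t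
    unfolding S_def by (auto simp: mult_nonneg_nonneg)
  have tqa: "1 - t \<le> 1 - t * q a" using t qa by (simp add: mult_left_le)
  show ?thesis
  proof (cases "R * (1 - ps a) \<le> b")
    case True
    define b2 where "b2 = b - R * (1 - ps a)"
    define p2 where "p2 = p(a := 1)"
    define g2 where "g2 = greedy R ps \<tau> b2 p2"
    have g: "greedy R ps (a # \<tau>) b p = g2" using True by (simp add: g2_def b2_def p2_def)
    have g2a: "g2 a = 1" using aS by (simp add: g2_def G0 p2_def S_def)
    have b2: "0 \<le> b2" using True b2_def by simp
    have p2S: "\<forall>j\<in>set \<tau>. 0 \<le> ps j \<and> ps j \<le> 1 \<and> p2 j = ps j"
      using pspk aS by (auto simp: p2_def S_def)
    define \<beta>2 where "\<beta>2 = b2 / R"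
    have \<beta>2: "\<beta>2 = b / R - (1 - ps a)" using R by (simp add: \<beta>2_def b2_def diff_divide_distrib)
    have \<beta>20: "0 \<le> \<beta>2" using b2 R by (simp add: \<beta>2_def)
    have G0: "0 \<le> (\<Prod>j\<in>S. 1 - t * g2 j)"
    proof (rule prod_nonneg)
      fix k assume "k \<in> S"
      then have "ps k \<le> g2 k \<and> g2 k \<le> 1" unfolding g2_def S_def
        by (intro G1[OF dist]) (use p2S b2 R in auto)
      moreover have "0 \<le> ps k" using pspk \<open>k \<in> S\<close> by auto
      ultimately have "t * g2 k \<le> 1 * 1" using t by (intro mult_mono) auto
      then show "0 \<le> 1 - t * g2 k" by simp
    qed
    have "(1 - t) * (1 + (\<Prod>j\<in>S. 1 - t * g2 j)) \<le> (1 - t * q a) * (1 + PQ)"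
    proof (cases "D \<le> \<beta>2")
      case True
      have IH: "(\<Prod>j\<in>S. 1 - t * g2 j) \<le> PQ"
        unfolding g2_def S_def PQ_def
      proof (rule prodA[OF dist sorted p2S R b2 t])
        show "\<forall>j\<in>set \<tau>. 0 \<le> q j \<and> q j \<le> 1" using q01 by simp
        show "(\<Sum>j\<in>set \<tau>. max 0 (q j - ps j)) \<le> b2 / R"
          using True by (simp add: D_def \<delta>_def \<beta>2_def S_def)
      qed
      have "(1 - t) * (1 + (\<Prod>j\<in>S. 1 - t * g2 j)) \<le> (1 - t) * (1 + PQ)"
        using IH t by (intro mult_left_mono) auto
      also have "\<dots> \<le> (1 - t * q a) * (1 + PQ)"
        using tqa PQ by (intro mult_right_mono) auto
      finally show ?thesis .
    next
      case False
      define lam where "lam = \<beta>2 / D"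
      have Dp: "0 < D" using False \<beta>20 by simp
      have lam: "0 \<le> lam" "lam < 1" "lam * D = \<beta>2"
        using Dp \<beta>20 False by (auto simp: lam_def)
      define q' where "q' = (\<lambda>k. q k - (1 - lam) * \<delta> k)"
      have d': "max 0 (q' k - ps k) = lam * \<delta> k" for k
      proof (cases "ps k \<le> q k")
        case True
        then have "q' k - ps k = lam * (q k - ps k)" by (simp add: q'_def \<delta>_def algebra_simps)
        then show ?thesis using True lam by (simp add: \<delta>_def)
      next
        case False
        then show ?thesis by (simp add: q'_def \<delta>_def)
      qed
      have q'01: "0 \<le> q' k \<and> q' k \<le> 1" if "k \<in> S" for k
      proof -
        have "0 \<le> (1 - lam) * \<delta> k" using lam d0 by simp
        moreover have "0 \<le> q' k"
        proof (cases "ps k \<le> q k")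
          case True
          then have "q' k = ps k + lam * (q k - ps k)" by (simp add: q'_def \<delta>_def algebra_simps)
          then show ?thesis using True lam pspk that by simp
        next
          case False
          then show ?thesis using q01 that by (simp add: q'_def \<delta>_def S_def)
        qed
        ultimately show ?thesis using q01 that by (auto simp: q'_def S_def)
      qed
      have IH: "(\<Prod>j\<in>S. 1 - t * g2 j) \<le> (\<Prod>j\<in>S. 1 - t * q' j)"
        unfolding g2_def S_def
      proof (rule prodA[OF dist sorted p2S R b2 t])
        show "\<forall>j\<in>set \<tau>. 0 \<le> q' j \<and> q' j \<le> 1" using q'01 by (simp add: S_def)
        have "(\<Sum>j\<in>set \<tau>. max 0 (q' j - ps j)) = lam * D"
          by (simp add: d' D_def S_def sum_distrib_left)
        then show "(\<Sum>j\<in>set \<tau>. max 0 (q' j - ps j)) \<le> b2 / R"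
          using lam by (simp add: \<beta>2_def)
      qed
      have Lp: "(\<Prod>k\<in>S. (1 - t * q k) + t * (1 - lam) * \<delta> k) \<le> PQ + (\<Sum>k\<in>S. t * (1 - lam) * \<delta> k)"
        unfolding PQ_def
      proof (rule L1[OF finS], intro ballI conjI)
        fix k assume k: "k \<in> S"
        show "0 \<le> 1 - t * q k" using nnq k by simp
        show "0 \<le> t * (1 - lam) * \<delta> k" using t lam d0 by simp
        have "0 \<le> t * q' k" using q'01 k t by simp
        then show "1 - t * q k + t * (1 - lam) * \<delta> k \<le> 1" by (simp add: q'_def algebra_simps)
      qed
      have eq: "(\<Prod>k\<in>S. (1 - t * q k) + t * (1 - lam) * \<delta> k) = (\<Prod>k\<in>S. 1 - t * q' k)"
        by (rule prod.cong) (auto simp: q'_def algebra_simps)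
      have se: "(\<Sum>k\<in>S. t * (1 - lam) * \<delta> k) = t * (D - \<beta>2)"
      proof -
        have "(\<Sum>k\<in>S. t * (1 - lam) * \<delta> k) = t * (1 - lam) * D" by (simp add: D_def sum_distrib_left)
        also have "\<dots> = t * (D - \<beta>2)" using lam(3) by (simp add: algebra_simps)
        finally show ?thesis .
      qed
      have c: "D - \<beta>2 \<le> 1 - q a" using qa budget \<beta>2 by simp
      have "(1 - t) * (1 + (\<Prod>j\<in>S. 1 - t * g2 j)) \<le> (1 - t) * (1 + (PQ + t * (D - \<beta>2)))"
        using IH Lp eq se t by (intro mult_left_mono) auto
      also have "\<dots> \<le> (1 - t * q a) * (1 + PQ)"
      proof -
        have e1: "(1 - t * q a) * (1 + PQ) - (1 - t) * (1 + (PQ + t * (D - \<beta>2)))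
            = t * (1 - q a) * (1 + PQ) - (1 - t) * t * (D - \<beta>2)" by (simp add: algebra_simps)
        have "(1 - t) * t * (D - \<beta>2) \<le> (1 - t) * t * (1 - q a)"
          using c t by (intro mult_left_mono) auto
        also have "\<dots> \<le> 1 * t * (1 - q a)" using t qa by (intro mult_right_mono) auto
        also have "\<dots> \<le> t * (1 - q a) * (1 + PQ)"
        proof -
          have "0 \<le> t * (1 - q a)" using t qa by simp
          then have "t * (1 - q a) * 1 \<le> t * (1 - q a) * (1 + PQ)" using PQ by (intro mult_left_mono) auto
          then show ?thesis by simp
        qed
        finally show ?thesis using e1 by simp
      qed
      finally show ?thesis .
    qed
    then show ?thesis using g g2a by (simp add: S_def PQ_def)
  next
    case False
    define \<beta> where "\<beta> = b / R"
    have lt: "\<beta> < 1 - ps a" using False R unfolding \<beta>_def by (simp add: divide_less_eq mult.commute)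
    have g: "greedy R ps (a # \<tau>) b p = p(a := ps a + \<beta>)" using False \<beta>_def by simp
    define A where "A = 1 - t * ps a"
    define H where "H = (\<lambda>k. 1 - t * ps k)"
    define e where "e = (\<lambda>k. t * \<delta> k)"
    define x where "x = t * \<delta> a"
    have sd0: "0 \<le> D" by (rule D0)
    have LHS: "(1 - t * greedy R ps (a # \<tau>) b p a) * (1 + (\<Prod>j\<in>set \<tau>. 1 - t * greedy R ps (a # \<tau>) b p j))
        = (A - t * \<beta>) * (1 + prod H S)"
    proof -
      have "(\<Prod>j\<in>set \<tau>. 1 - t * greedy R ps (a # \<tau>) b p j) = prod H S"
        unfolding g S_def H_def using aS pspk by (intro prod.cong) (auto simp: S_def)
      then show ?thesis unfolding g A_def by (simp add: algebra_simps)
    qed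
    have Hk: "\<forall>k\<in>S. 0 \<le> e k \<and> e k \<le> H k \<and> H k \<le> 1"
    proof
      fix k assume k: "k \<in> S"
      have "0 \<le> e k" unfolding e_def using d0 t by simp
      moreover have "e k \<le> H k"
      proof -
        have "t * max (q k) (ps k) \<le> 1 * 1"
          using t pspk k q01 unfolding S_def by (intro mult_mono) auto
        moreover have "\<delta> k + ps k = max (q k) (ps k)" unfolding \<delta>_def by auto
        ultimately have "t * (\<delta> k + ps k) \<le> 1" by simp
        then show ?thesis unfolding e_def H_def by (simp add: algebra_simps)
      qed
      moreover have "H k \<le> 1" unfolding H_def using t pspk k by simp
      ultimately show "0 \<le> e k \<and> e k \<le> H k \<and> H k \<le> 1" by simp
    qed
    have W: "prod H S - sum e S \<le> prod (\<lambda>k. H k - e k) S"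
      by (rule W2[OF finS Hk])
    have se: "sum e S = t * D" unfolding e_def D_def by (simp add: sum_distrib_left)
    have PH0: "0 \<le> prod H S" using Hk by (intro prod_nonneg) (meson order_trans)
    have PEQ: "prod (\<lambda>k. H k - e k) S \<le> PQ"
      unfolding PQ_def
    proof (rule prod_mono)
      fix k assume k: "k \<in> S"
      have "t * q k \<le> t * (ps k + \<delta> k)" using t unfolding \<delta>_def by (intro mult_left_mono) auto
      then show "0 \<le> H k - e k \<and> H k - e k \<le> 1 - t * q k"
        using Hk k unfolding H_def e_def by (auto simp: algebra_simps)
    qed
    have xa: "0 \<le> x" "x \<le> t * \<beta>" "A - x \<le> 1 - t * q a" "0 \<le> A - x" "A \<le> 1"
    proof -
      show "0 \<le> x" unfolding x_def using t d0 by simp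
      show "x \<le> t * \<beta>" unfolding x_def \<beta>_def using t budget sd0 by (intro mult_left_mono) auto
      have "t * q a \<le> t * (ps a + \<delta> a)" using t unfolding \<delta>_def by (intro mult_left_mono) auto
      then show "A - x \<le> 1 - t * q a" unfolding A_def x_def by (simp add: algebra_simps)
      have "t * max (q a) (ps a) \<le> 1 * 1" using t qa psa by (intro mult_mono) auto
      moreover have "\<delta> a + ps a = max (q a) (ps a)" unfolding \<delta>_def by auto
      ultimately have "t * (\<delta> a + ps a) \<le> 1" by simp
      then show "0 \<le> A - x" unfolding A_def x_def by (simp add: algebra_simps)
      show "A \<le> 1" unfolding A_def using t psa by simp
    qed
    have tD: "t * D \<le> t * \<beta> - x"
    proof -
      have "t * D \<le> t * (\<beta> - \<delta> a)" using budget t unfolding \<beta>_def by (intro mult_left_mono) auto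
      then show ?thesis unfolding x_def by (simp add: algebra_simps)
    qed
    have "(A - t * \<beta>) * (1 + prod H S) \<le> (A - x) * (1 + prod H S - (t * \<beta> - x))"
    proof -
      have "(A - x) * (1 + prod H S - (t * \<beta> - x)) - (A - t * \<beta>) * (1 + prod H S)
          = (t * \<beta> - x) * (1 + prod H S - A + x)" by (simp add: algebra_simps)
      also have "\<dots> \<ge> 0" using xa PH0 by (intro mult_nonneg_nonneg) auto
      finally show ?thesis by simp
    qed
    also have "\<dots> \<le> (A - x) * (1 + prod H S - t * D)"
      using tD xa by (intro mult_left_mono) auto
    also have "\<dots> \<le> (A - x) * (1 + PQ)"
      using W se PEQ xa by (intro mult_left_mono) auto
    also have "\<dots> \<le> (1 - t * q a) * (1 + PQ)"
      using xa PQ by (intro mult_right_mono) auto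
    finally show ?thesis using LHS by (simp add: PQ_def S_def)
  qed
qed

lemma feasible_q:
  assumes "feasible V 1 p1 ps L R B q" "0 < L" "0 < R"
  shows "q 1 = p1" "\<forall>j\<in>V - {1}. 0 \<le> q j \<and> q j \<le> 1"
    "(\<Sum>j\<in>V - {1}. max 0 (q j - ps j)) \<le> B / R"
proof -
  show "q 1 = p1" "\<forall>j\<in>V - {1}. 0 \<le> q j \<and> q j \<le> 1" using assms(1) unfolding feasible_def by auto
  have "(\<Sum>j\<in>V - {1}. R * max 0 (q j - ps j)) \<le> (\<Sum>j\<in>V - {1}. cost L R (ps j) (q j))"
  proof (rule sum_mono)
    fix j
    show "R * max 0 (q j - ps j) \<le> cost L R (ps j) (q j)"
      using assms(2,3) unfolding cost_def by (auto simp: max_def)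
  qed
  also have "\<dots> \<le> B" using assms(1) unfolding feasible_def by auto
  finally have "R * (\<Sum>j\<in>V - {1}. max 0 (q j - ps j)) \<le> B" by (simp add: sum_distrib_left)
  then show "(\<Sum>j\<in>V - {1}. max 0 (q j - ps j)) \<le> B / R" using assms(3)
    by (simp add: pos_le_divide_eq mult.commute)
qed

lemma greedy_feas:
  assumes "distinct \<sigma>" "set \<sigma> = V - {1}" "\<forall>j\<in>set \<sigma>. 0 \<le> ps j \<and> ps j \<le> 1" "0 < R" "0 \<le> B"
  shows "feasible V 1 p1 ps L R B (greedy_profile 1 p1 ps R B \<sigma>)"
proof -
  define g where "g = greedy R ps \<sigma> B (ps(1 := p1))"
  have p0: "\<forall>j\<in>set \<sigma>. (ps(1 := p1)) j = ps j \<and> ps j \<le> 1" using assms(2,3) by auto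
  have g1: "g 1 = p1" using assms(2) by (simp add: g_def G0)
  have gb: "ps j \<le> g j \<and> g j \<le> 1" if "j \<in> set \<sigma>" for j
    unfolding g_def by (rule G1[OF assms(1) p0 assms(5,4) that])
  have "(\<Sum>j\<in>V - {1}. cost L R (ps j) (g j)) = (\<Sum>j\<in>set \<sigma>. R * (g j - ps j))"
  proof (rule sum.cong)
    show "V - {1} = set \<sigma>" using assms(2) by simp
    fix x assume "x \<in> set \<sigma>"
    then have "ps x \<le> g x" using gb by auto
    then show "cost L R (ps x) (g x) = R * (g x - ps x)" by (simp add: cost_def)
  qed
  also have "\<dots> = R * min (\<Sum>j\<in>set \<sigma>. 1 - ps j) (B / R)"
  proof -
    have "(\<Sum>j\<in>set \<sigma>. g j - ps j) = min (\<Sum>j\<in>set \<sigma>. 1 - ps j) (B / R)"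
      unfolding g_def by (rule G3[OF assms(1) p0 assms(5,4)])
    moreover have "(\<Sum>j\<in>set \<sigma>. R * (g j - ps j)) = R * (\<Sum>j\<in>set \<sigma>. g j - ps j)"
      by (rule sum_distrib_left[symmetric])
    ultimately show ?thesis by simp
  qed
  also have "\<dots> \<le> R * (B / R)" using assms(4) by (intro mult_left_mono) auto
  also have "\<dots> = B" using assms(4) by simp
  finally have c: "(\<Sum>j\<in>V - {1}. cost L R (ps j) (g j)) \<le> B" .
  have gb2: "\<forall>j\<in>V - {1}. 0 \<le> g j \<and> g j \<le> 1"
  proof
    fix j assume "j \<in> V - {1}"
    then have j: "j \<in> set \<sigma>" using assms(2) by simp
    then have "0 \<le> ps j" using assms(3) by blast
    with gb[OF j] show "0 \<le> g j \<and> g j \<le> 1" by linarith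
  qed
  have gp: "greedy_profile 1 p1 ps R B \<sigma> = g" unfolding greedy_profile_def g_def ..
  show ?thesis unfolding feasible_def gp using g1 gb2 c by blast
qed

lemma sum_le_greedy:
  assumes "distinct \<sigma>" "\<forall>j\<in>set \<sigma>. p j = ps j \<and> ps j \<le> 1" "0 < R" "0 \<le> b"
    "\<forall>j\<in>set \<sigma>. 0 \<le> q j \<and> q j \<le> 1" "(\<Sum>j\<in>set \<sigma>. max 0 (q j - ps j)) \<le> b / R"
  shows "(\<Sum>j\<in>set \<sigma>. q j) \<le> (\<Sum>j\<in>set \<sigma>. greedy R ps \<sigma> b p j)"
proof -
  have e: "(\<Sum>j\<in>set \<sigma>. greedy R ps \<sigma> b p j - ps j) = min (\<Sum>j\<in>set \<sigma>. 1 - ps j) (b / R)"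
    by (rule G3[OF assms(1) assms(2) assms(4) assms(3)])
  have "(\<Sum>j\<in>set \<sigma>. q j - ps j) \<le> (\<Sum>j\<in>set \<sigma>. max 0 (q j - ps j))" by (intro sum_mono) auto
  then have a1: "(\<Sum>j\<in>set \<sigma>. q j - ps j) \<le> b / R" using assms(6) by linarith
  have a2: "(\<Sum>j\<in>set \<sigma>. q j - ps j) \<le> (\<Sum>j\<in>set \<sigma>. 1 - ps j)" using assms(5) by (intro sum_mono) auto
  have "(\<Sum>j\<in>set \<sigma>. q j - ps j) \<le> (\<Sum>j\<in>set \<sigma>. greedy R ps \<sigma> b p j - ps j)" using e a1 a2 by simp
  then show ?thesis by (simp add: sum_subtractf)
qed

lemma kt_term: "1 - t + t * (if c then 1 - x else 1) = (if c then 1 - t * x else (1::real))"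
  by (simp add: algebra_simps)

lemma Kt_complete:
  assumes "finite V"
  shows "Kt complete_graph V p t = real (card V) * (\<Prod>i\<in>V - {1}. 1 - t * p i)"
  unfolding Kt_def complete_graph_def kt_term by (simp add: if_distrib)

lemma Kt_star1:
  assumes "finite V" "1 \<in> V"
  shows "Kt (star_graph 1) V p t = (\<Prod>i\<in>V - {1}. 1 - t * p i) + (\<Sum>j\<in>V - {1}. 1 - t * p j)"
proof -
  have s: "{j\<in>V. 1 = j \<or> star_graph 1 1 j} = V" unfolding star_graph_def by auto
  define f where "f = (\<lambda>j. \<Prod>i\<in>V - {1}. if (i = j \<or> star_graph 1 i j) then 1 - t * p i else 1)"
  have "Kt (star_graph 1) V p t = (\<Sum>j\<in>V. f j)" unfolding Kt_def kt_term s f_def ..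
  also have "\<dots> = f 1 + (\<Sum>j\<in>V - {1}. f j)" using assms by (simp add: sum.remove)
  also have "f 1 = (\<Prod>i\<in>V - {1}. 1 - t * p i)" unfolding f_def star_graph_def by (intro prod.cong) auto
  also have "(\<Sum>j\<in>V - {1}. f j) = (\<Sum>j\<in>V - {1}. 1 - t * p j)"
  proof (rule sum.cong[OF refl])
    fix j assume j: "j \<in> V - {1}"
    have "f j = (\<Prod>i\<in>V - {1}. if i = j then 1 - t * p i else 1)"
      unfolding f_def star_graph_def using j by (intro prod.cong) auto
    also have "\<dots> = 1 - t * p j" using j assms by (simp add: prod.delta)
    finally show "f j = 1 - t * p j" .
  qed
  finally show ?thesis .
qed

lemma Kt_star2:
  assumes "finite V" "1 \<in> V" "2 \<in> V"
  shows "Kt (star_graph 2) V p t = (1 - t * p 2) * (1 + (\<Prod>i\<in>V - {1} - {2}. 1 - t * p i))"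
proof -
  have s: "{j\<in>V. 1 = j \<or> star_graph 2 1 j} = {1, 2}" using assms unfolding star_graph_def by auto
  define f where "f = (\<lambda>j. \<Prod>i\<in>V - {1}. if (i = j \<or> star_graph 2 i j) then 1 - t * p i else 1)"
  have "Kt (star_graph 2) V p t = (\<Sum>j\<in>{1,2}. f j)" unfolding Kt_def kt_term s f_def ..
  also have "\<dots> = f 1 + f 2" by simp
  also have "f 1 = (\<Prod>i\<in>V - {1}. if i = 2 then 1 - t * p i else 1)"
    unfolding f_def star_graph_def by (intro prod.cong) auto
  also have "\<dots> = 1 - t * p 2" using assms by (simp add: prod.delta)
  also have "f 2 = (\<Prod>i\<in>V - {1}. 1 - t * p i)" unfolding f_def star_graph_def by (intro prod.cong) auto
  also have "\<dots> = (1 - t * p 2) * (\<Prod>i\<in>V - {1} - {2}. 1 - t * p i)"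
    by (rule prod.remove) (use assms in auto)
  finally show ?thesis by (simp add: algebra_simps)
qed

lemma rel_ext_cong:
  assumes h: "\<forall>i\<in>S. p i = q i" shows "rel_ext v p S = rel_ext v q S"
  unfolding rel_ext_def Pi_TS_def
proof (rule sum.cong[OF refl])
  fix T assume T: "T \<in> Pow S"
  have "(\<Prod>i\<in>T. p i) = (\<Prod>i\<in>T. q i)" using T h by (intro prod.cong) auto
  moreover have "(\<Prod>i\<in>S - T. 1 - p i) = (\<Prod>i\<in>S - T. 1 - q i)" using h by (intro prod.cong) auto
  ultimately show "v T * ((\<Prod>i\<in>T. p i) * (\<Prod>i\<in>S - T. 1 - p i)) = v T * ((\<Prod>i\<in>T. q i) * (\<Prod>i\<in>S - T. 1 - q i))"
    by simp
qed

lemma shapley_empty: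
  assumes "p 1 = q 1"
  shows "shapley {} (rel_ext v p) 1 = shapley {} (rel_ext v q) 1"
proof -
  have sh: "shapley {} f 1 = f {1} - f {}" for f :: "nat set \<Rightarrow> real"
    unfolding shapley_def by simp
  have "rel_ext v p {1} = rel_ext v q {1}" by (rule rel_ext_cong) (use assms in simp)
  moreover have "rel_ext v p {} = rel_ext v q {}" by (rule rel_ext_cong) simp
  ultimately show ?thesis unfolding sh by simp
qed

theorem theorem4:
  fixes n :: nat and pstar :: "nat \<Rightarrow> real" and p1 L R B :: real
  assumes hpstar: "\<forall>j\<in>{2..n}. 0 < pstar j \<and> pstar j \<le> 1"
    and hp1: "0 \<le> p1" "p1 \<le> 1"
    and hL: "L > 0" and hR: "R > 0" and hB: "B \<ge> 0"
  shows
   "(\<forall>E \<sigma>. (E = complete_graph \<or> E = star_graph 1) \<longrightarrow>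
        distinct \<sigma> \<longrightarrow> set \<sigma> = {2..n} \<longrightarrow>
        sorted_wrt (\<lambda>i j. pstar i \<ge> pstar j) \<sigma> \<longrightarrow>
        optimal_attack E {1..n} 1 p1 pstar L R B (greedy_profile 1 p1 pstar R B \<sigma>))
    \<and> (n \<ge> 2 \<longrightarrow> (\<forall>\<tau>. distinct \<tau> \<longrightarrow> set \<tau> = {3..n} \<longrightarrow>
        sorted_wrt (\<lambda>i j. pstar i \<ge> pstar j) \<tau> \<longrightarrow>
        optimal_attack (star_graph 2) {1..n} 1 p1 pstar L R B
          (greedy_profile 1 p1 pstar R B (2 # \<tau>))))"
proof -
  have fin: "finite {1..n}" by simp
  have W: "{1..n} - {1} = {2..n}" by auto
  have ps01: "\<forall>j\<in>{2..n}. 0 \<le> pstar j \<and> pstar j \<le> 1" using hpstar by auto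
  have p0: "\<forall>j\<in>{2..n}. 0 \<le> pstar j \<and> pstar j \<le> 1 \<and> (pstar(1 := p1)) j = pstar j"
    using ps01 by auto
  show ?thesis
  proof (intro conjI allI impI)
    fix E \<sigma>
    assume hE: "E = complete_graph \<or> E = star_graph 1" and d: "distinct \<sigma>" and s: "set \<sigma> = {2..n}"
      and so: "sorted_wrt (\<lambda>i j. pstar i \<ge> pstar j) \<sigma>"
    have s': "set \<sigma> = {1..n} - {1}" using s W by simp
    define g where "g = greedy_profile 1 p1 pstar R B \<sigma>"
    have feas: "feasible {1..n} 1 p1 pstar L R B g"
      unfolding g_def by (rule greedy_feas[OF d s' _ hR hB]) (use ps01 s in auto)
    show "optimal_attack E {1..n} 1 p1 pstar L R B (greedy_profile 1 p1 pstar R B \<sigma>)"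
      unfolding optimal_attack_def g_def[symmetric]
    proof (intro conjI allI impI feas)
      fix q assume fq: "feasible {1..n} 1 p1 pstar L R B q"
      note fqs = feasible_q[OF fq hL hR]
      have g1: "g 1 = p1" using feas unfolding feasible_def by simp
      show "shapley {1..n} (rel_ext (v_NC1 E {1..n}) g) 1 \<le> shapley {1..n} (rel_ext (v_NC1 E {1..n}) q) 1"
      proof (cases "n = 0")
        case True
        then have e: "{1..n} = ({}::nat set)" by simp
        show ?thesis unfolding e using shapley_empty[of g q] g1 fqs(1) by simp
      next
        case False
        then have one: "1 \<in> {1..n}" by simp
        show ?thesis
        proof (rule shapley_le[OF fin one])
          show "g 1 = q 1" using g1 fqs by simp
          show "0 \<le> g 1" using g1 hp1 by simp
          fix t :: real assume t: "0 \<le> t" "t \<le> 1"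
          have q01: "\<forall>j\<in>set \<sigma>. 0 \<le> q j \<and> q j \<le> 1" using fqs(2) s' by simp
          have qb: "(\<Sum>j\<in>set \<sigma>. max 0 (q j - pstar j)) \<le> B / R" using fqs(3) s' by simp
          have pA: "(\<Prod>j\<in>set \<sigma>. 1 - t * g j) \<le> (\<Prod>j\<in>set \<sigma>. 1 - t * q j)"
            unfolding g_def greedy_profile_def
            by (rule prodA[OF d so _ hR hB t q01 qb]) (use p0 s in auto)
          from hE show "Kt E {1..n} g t \<le> Kt E {1..n} q t"
          proof
            assume E: "E = complete_graph"
            show ?thesis unfolding E Kt_complete[OF fin] s'[symmetric] using pA by (intro mult_left_mono) auto
          next
            assume E: "E = star_graph 1"
            have sA: "(\<Sum>j\<in>set \<sigma>. q j) \<le> (\<Sum>j\<in>set \<sigma>. g j)" unfolding g_def greedy_profile_def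
              by (rule sum_le_greedy[OF d _ hR hB q01 qb]) (use p0 s in auto)
            have "(\<Sum>j\<in>set \<sigma>. 1 - t * g j) = real (card (set \<sigma>)) - t * (\<Sum>j\<in>set \<sigma>. g j)"
              by (simp add: sum_subtractf sum_distrib_left)
            also have "\<dots> \<le> real (card (set \<sigma>)) - t * (\<Sum>j\<in>set \<sigma>. q j)"
              using sA t by (simp add: mult_left_mono)
            also have "\<dots> = (\<Sum>j\<in>set \<sigma>. 1 - t * q j)"
              by (simp add: sum_subtractf sum_distrib_left)
            finally have sB: "(\<Sum>j\<in>set \<sigma>. 1 - t * g j) \<le> (\<Sum>j\<in>set \<sigma>. 1 - t * q j)" .
            show ?thesis unfolding E Kt_star1[OF fin one] s'[symmetric] using pA sB by simp
          qed
        qed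
      qed
    qed
  next
    fix \<tau>
    assume n2: "2 \<le> n" and d: "distinct \<tau>" and s: "set \<tau> = {3..n}"
      and so: "sorted_wrt (\<lambda>i j. pstar i \<ge> pstar j) \<tau>"
    have a: "2 \<notin> set \<tau>" using s by simp
    have d2: "distinct (2 # \<tau>)" using d a by simp
    have s2: "set (2 # \<tau>) = {1..n} - {1}" using s n2 by auto
    have s3: "{1..n} - {1} - {2} = set \<tau>" using s n2 by auto
    define g where "g = greedy_profile 1 p1 pstar R B (2 # \<tau>)"
    have feas: "feasible {1..n} 1 p1 pstar L R B g"
      unfolding g_def by (rule greedy_feas[OF d2 s2 _ hR hB]) (use ps01 s2 W in auto)
    show "optimal_attack (star_graph 2) {1..n} 1 p1 pstar L R B (greedy_profile 1 p1 pstar R B (2 # \<tau>))"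
      unfolding optimal_attack_def g_def[symmetric]
    proof (intro conjI allI impI feas)
      fix q assume fq: "feasible {1..n} 1 p1 pstar L R B q"
      note fqs = feasible_q[OF fq hL hR]
      have g1: "g 1 = p1" using feas unfolding feasible_def by simp
      have one: "1 \<in> {1..n}" and two: "2 \<in> {1..n}" using n2 by auto
      show "shapley {1..n} (rel_ext (v_NC1 (star_graph 2) {1..n}) g) 1
          \<le> shapley {1..n} (rel_ext (v_NC1 (star_graph 2) {1..n}) q) 1"
      proof (rule shapley_le[OF fin one])
        show "g 1 = q 1" using g1 fqs by simp
        show "0 \<le> g 1" using g1 hp1 by simp
        fix t :: real assume t: "0 \<le> t" "t \<le> 1"
        have q01: "\<forall>j\<in>set (2 # \<tau>). 0 \<le> q j \<and> q j \<le> 1" using fqs(2) s2 by simp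
        have qb: "(\<Sum>j\<in>set (2 # \<tau>). max 0 (q j - pstar j)) \<le> B / R" using fqs(3) s2 by simp
        have pC: "(1 - t * g 2) * (1 + (\<Prod>j\<in>set \<tau>. 1 - t * g j)) \<le> (1 - t * q 2) * (1 + (\<Prod>j\<in>set \<tau>. 1 - t * q j))"
          unfolding g_def greedy_profile_def
          by (rule prodC[OF a d so _ hR hB t q01 qb]) (use p0 s2 W in auto)
        show "Kt (star_graph 2) {1..n} g t \<le> Kt (star_graph 2) {1..n} q t"
          unfolding Kt_star2[OF fin one two] s3 using pC .
      qed
    qed
  qed
qed

end
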